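(* Let $\widehat A$ be an operator on $L^2(\mathbb{R}^N)$ with Weyl symbol $A$, let $z_0\in T^*\mathbb{R}^N$ and $a_0:=A(z_0)$. Let $g$ be a smooth function and let $C$ be the Weyl symbol of $\widehat C:=g(\widehat A)$. If $g$ has a zero of order $m$ at $a_0$, then $C(z_0)=O(\hbar^{m/2})$.
   Context: Symbols are elements of $\mathcal{C}^\infty(T^*\mathbb{R}^N)[[\hbar]]$ and operators are related to symbols by Weyl quantization $A\mapsto\widehat A$, which is an algebra isomorphism onto its image when symbols carry the Moyal product $\star$ (i.e. the symbol of $\widehat C\widehat D$ is $C\star D$), where $C\star D=\sum_{k\ge0}\frac1{k!}(\frac{i\hbar}{2})^k C_{,\mu_1\ldots\mu_k}J^{\mu_1\nu_1}\cdots J^{\mu_k\nu_k}D_{,\nu_1\ldots\nu_k}$ in coordinates $z=(x,p)$ with $(J^{\mu\nu})=\begin{pmatrix}0&I_N\\-I_N&0\end{pmatrix}$. Functions of operators $g(\widehat A)$ are defined by a spectral calculus, which is an algebra morphism: $g(\widehat A)h(\widehat A)=(gh)(\widehat A)$. *)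

theory Defs
  imports "HOL-Analysis.Analysis"
begin

text \<open>Phase space T*R^N = R^(2N), coordinates indexed by 'n + 'n:
  Inl i is the position coordinate x_i, Inr i the momentum coordinate p_i.\<close>

type_synonym 'n phase = "(real, 'n + 'n) vec"

text \<open>A symbol in C^infty(T*R^N)[[hbar]]: coefficient k is the coefficient of hbar^k.\<close>
type_synonym 'n symb = "nat \<Rightarrow> 'n phase \<Rightarrow> complex"

definition pdiff :: "('n::finite + 'n) \<Rightarrow> ('n phase \<Rightarrow> complex) \<Rightarrow> 'n phase \<Rightarrow> complex" where
  "pdiff \<mu> f = (\<lambda>z. vector_derivative (\<lambda>t::real. f (z + t *\<^sub>R axis \<mu> 1)) (at 0))"

fun iter_pdiff :: "('n::finite + 'n) list \<Rightarrow> ('n phase \<Rightarrow> complex) \<Rightarrow> 'n phase \<Rightarrow> complex" where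
  "iter_pdiff [] f = f"
| "iter_pdiff (\<mu> # \<mu>s) f = pdiff \<mu> (iter_pdiff \<mu>s f)"

definition smooth_phase :: "('n::finite phase \<Rightarrow> complex) \<Rightarrow> bool" where
  "smooth_phase f \<longleftrightarrow> (\<forall>\<mu>s z. iter_pdiff \<mu>s f differentiable (at z))"

definition smooth_symb :: "'n::finite symb \<Rightarrow> bool" where
  "smooth_symb S \<longleftrightarrow> (\<forall>k. smooth_phase (S k))"

fun symplJ :: "('n + 'n) \<Rightarrow> ('n + 'n) \<Rightarrow> real" where
  "symplJ (Inl i) (Inr j) = (if i = j then 1 else 0)"
| "symplJ (Inr i) (Inl j) = (if i = j then -1 else 0)"
| "symplJ _ _ = 0"

text \<open>Moyal product of formal power series in hbar:
  C * D = sum_k 1/k! (i hbar/2)^k C_{,mu1..muk} J^{mu1 nu1}...J^{muk nuk} D_{,nu1..nuk},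
  written coefficientwise in hbar.\<close>
definition moyal_term :: "nat \<Rightarrow> ('n::finite phase \<Rightarrow> complex) \<Rightarrow> ('n phase \<Rightarrow> complex) \<Rightarrow> 'n phase \<Rightarrow> complex" where
  "moyal_term k f h z =
     (\<Sum>\<mu>s\<in>{\<mu>s::('n+'n) list. length \<mu>s = k}. \<Sum>\<nu>s\<in>{\<nu>s::('n+'n) list. length \<nu>s = k}.
        iter_pdiff \<mu>s f z * complex_of_real (\<Prod>r<k. symplJ (\<mu>s ! r) (\<nu>s ! r)) * iter_pdiff \<nu>s h z)"

definition moyal :: "'n::finite symb \<Rightarrow> 'n symb \<Rightarrow> 'n symb" (infixl "\<star>" 70) where
  "moyal C D = (\<lambda>n z. \<Sum>j\<le>n. \<Sum>k\<le>n - j.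
      (\<i> / 2) ^ k / of_nat (fact k) * moyal_term k (C j) (D (n - j - k)) z)"

definition const_symb :: "complex \<Rightarrow> 'n symb" where
  "const_symb c = (\<lambda>k z. if k = 0 then c else 0)"

definition vderiv :: "(real \<Rightarrow> complex) \<Rightarrow> real \<Rightarrow> complex" where
  "vderiv g = (\<lambda>t. vector_derivative g (at t))"

definition smooth_fun :: "(real \<Rightarrow> complex) \<Rightarrow> bool" where
  "smooth_fun g \<longleftrightarrow> (\<forall>k t. (vderiv ^^ k) g differentiable (at t))"

definition zero_of_order :: "(real \<Rightarrow> complex) \<Rightarrow> real \<Rightarrow> nat \<Rightarrow> bool" where
  "zero_of_order g a m \<longleftrightarrow> (\<forall>k<m. (vderiv ^^ k) g a = 0) \<and> (vderiv ^^ m) g a \<noteq> 0"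

text \<open>Spectral calculus of the operator with Weyl symbol A, read on symbols:
  Phi g is the Weyl symbol of g(A^).\<close>
definition symbol_calculus :: "'n::finite symb \<Rightarrow> ((real \<Rightarrow> complex) \<Rightarrow> 'n symb) \<Rightarrow> bool" where
  "symbol_calculus A \<Phi> \<longleftrightarrow>
     (\<forall>g. smooth_fun g \<longrightarrow> smooth_symb (\<Phi> g)) \<and>
     (\<forall>g h. smooth_fun g \<longrightarrow> smooth_fun h \<longrightarrow> \<Phi> (\<lambda>t. g t + h t) = (\<lambda>k z. \<Phi> g k z + \<Phi> h k z)) \<and>
     (\<forall>g h. smooth_fun g \<longrightarrow> smooth_fun h \<longrightarrow> \<Phi> (\<lambda>t. g t * h t) = \<Phi> g \<star> \<Phi> h) \<and>
     (\<forall>c. \<Phi> (\<lambda>_. c) = const_symb c) \<and>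
     \<Phi> (\<lambda>t. complex_of_real t) = A"

end

theory Submission
  imports Defs
begin


lemma line_diff:
  fixes f :: "'n::finite phase \<Rightarrow> complex"
  assumes "f differentiable (at z)"
  shows "(\<lambda>t::real. f (z + t *\<^sub>R axis \<mu> 1)) differentiable (at 0)"
proof -
  have "(\<lambda>t::real. z + t *\<^sub>R axis \<mu> (1::real)) differentiable (at 0)"
    by (intro derivative_intros)
  moreover have "f differentiable (at ((\<lambda>t::real. z + t *\<^sub>R axis \<mu> (1::real)) 0))"
    using assms by simp
  ultimately show ?thesis by (rule differentiable_compose[rotated])
qed

lemma pdiff_add:
  fixes f h :: "'n::finite phase \<Rightarrow> complex"
  assumes "f differentiable (at z)" "h differentiable (at z)"
  shows "pdiff \<mu> (\<lambda>z. f z + h z) z = pdiff \<mu> f z + pdiff \<mu> h z"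
  unfolding pdiff_def using line_diff[OF assms(1)] line_diff[OF assms(2)]
  by simp

lemma pdiff_mult:
  fixes f h :: "'n::finite phase \<Rightarrow> complex"
  assumes "f differentiable (at z)" "h differentiable (at z)"
  shows "pdiff \<mu> (\<lambda>z. f z * h z) z = pdiff \<mu> f z * h z + f z * pdiff \<mu> h z"
  unfolding pdiff_def using line_diff[OF assms(1)] line_diff[OF assms(2)]
  by simp

lemma pdiff_sum:
  fixes F :: "'i \<Rightarrow> 'n::finite phase \<Rightarrow> complex"
  assumes "\<And>i. i \<in> I \<Longrightarrow> F i differentiable (at z)"
  shows "pdiff \<mu> (\<lambda>z. \<Sum>i\<in>I. F i z) z = (\<Sum>i\<in>I. pdiff \<mu> (F i) z)"
  unfolding pdiff_def
  by (rule vector_derivative_at, rule has_vector_derivative_sum,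
      use line_diff[OF assms] in \<open>auto simp: vector_derivative_works\<close>)

lemma iter_pdiff_append:
  "iter_pdiff (\<mu>s @ \<nu>s) f = iter_pdiff \<mu>s (iter_pdiff \<nu>s f)"
  by (induction \<mu>s) auto

lemma iter_pdiff_const:
  "iter_pdiff \<mu>s (\<lambda>_. c) = (\<lambda>_. if \<mu>s = [] then c else 0)"
  by (induction \<mu>s) (auto simp: pdiff_def)

lemma smooth_iter:
  "smooth_phase f \<Longrightarrow> smooth_phase (iter_pdiff \<nu>s f)"
  unfolding smooth_phase_def by (simp add: iter_pdiff_append[symmetric])

lemma smooth_pdiff:
  "smooth_phase f \<Longrightarrow> smooth_phase (pdiff \<mu> f)"
  using smooth_iter[of f "[\<mu>]"] by simp

lemma smooth_diff: "smooth_phase f \<Longrightarrow> f differentiable (at z)"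
  unfolding smooth_phase_def by (drule spec[of _ "[]"]) simp

lemma smooth_const: "smooth_phase (\<lambda>_. c)"
  unfolding smooth_phase_def iter_pdiff_const by simp

lemma iter_pdiff_sum:
  fixes F :: "'i \<Rightarrow> 'n::finite phase \<Rightarrow> complex"
  assumes "\<forall>i\<in>I. smooth_phase (F i)"
  shows "iter_pdiff \<mu>s (\<lambda>z. \<Sum>i\<in>I. F i z) = (\<lambda>z. \<Sum>i\<in>I. iter_pdiff \<mu>s (F i) z)"
proof (induction \<mu>s)
  case Nil then show ?case by simp
next
  case (Cons \<mu> \<mu>s)
  show ?case
  proof -
    have d: "\<And>i z. i \<in> I \<Longrightarrow> iter_pdiff \<mu>s (F i) differentiable (at z)"
      by (rule smooth_diff, rule smooth_iter) (use assms in auto)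
    show ?thesis
      by (simp add: Cons, rule ext, rule pdiff_sum, rule d)
  qed
qed

lemma smooth_sum:
  fixes F :: "'i \<Rightarrow> 'n::finite phase \<Rightarrow> complex"
  assumes "finite I" "\<forall>i\<in>I. smooth_phase (F i)"
  shows "smooth_phase (\<lambda>z. \<Sum>i\<in>I. F i z)"
  unfolding smooth_phase_def
proof (intro allI)
  fix \<mu>s z
  show "iter_pdiff \<mu>s (\<lambda>z. \<Sum>i\<in>I. F i z) differentiable at z"
    unfolding iter_pdiff_sum[where I=I and F=F, OF assms(2)]
    using assms by (auto simp: smooth_phase_def intro!: differentiable_sum)
qed

lemma iter_pdiff_add:
  fixes F G :: "'n::finite phase \<Rightarrow> complex"
  assumes "\<And>\<nu>s z. length \<nu>s < length \<mu>s \<Longrightarrow>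
     iter_pdiff \<nu>s F differentiable (at z) \<and> iter_pdiff \<nu>s G differentiable (at z)"
  shows "iter_pdiff \<mu>s (\<lambda>z. F z + G z) = (\<lambda>z. iter_pdiff \<mu>s F z + iter_pdiff \<mu>s G z)"
  using assms
proof (induction \<mu>s)
  case Nil then show ?case by simp
next
  case (Cons \<mu> \<mu>s)
  have ih: "iter_pdiff \<mu>s (\<lambda>z. F z + G z) = (\<lambda>z. iter_pdiff \<mu>s F z + iter_pdiff \<mu>s G z)"
    using Cons.IH Cons.prems by force
  show ?case
    by (simp add: ih, rule ext, rule pdiff_add) (use Cons.prems in auto)
qed

lemma smooth_mult_aux:
  "\<forall>(f :: 'n::finite phase \<Rightarrow> complex) h. smooth_phase f \<longrightarrow> smooth_phase h \<longrightarrow>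
     (\<forall>(\<mu>s :: ('n+'n) list) z. length \<mu>s \<le> n \<longrightarrow> iter_pdiff \<mu>s (\<lambda>z. f z * h z) differentiable (at z))"
proof (induction n)
  case 0
  then show ?case using smooth_diff by (auto intro!: differentiable_mult)
next
  case (Suc n)
  show ?case
  proof (intro allI impI)
    fix f h :: "'n phase \<Rightarrow> complex" and \<mu>s :: "('n+'n) list" and z
    assume sf: "smooth_phase f" and sh: "smooth_phase h" and len: "length \<mu>s \<le> Suc n"
    show "iter_pdiff \<mu>s (\<lambda>z. f z * h z) differentiable (at z)"
    proof (cases "length \<mu>s \<le> n")
      case True then show ?thesis using Suc.IH sf sh by blast
    next
      case False
      then have len': "length \<mu>s = Suc n" using len by simp
      then have "\<mu>s \<noteq> []" by auto
      then obtain \<nu>s \<mu> where mus: "\<mu>s = \<nu>s @ [\<mu>]" by (cases \<mu>s rule: rev_cases) auto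
      with len' have ln: "length \<nu>s = n" by simp
      have IHa: "\<And>\<nu> z. length \<nu> \<le> n \<Longrightarrow> iter_pdiff \<nu> (\<lambda>z. pdiff \<mu> f z * h z) differentiable (at z)"
        using Suc.IH[rule_format, OF smooth_pdiff[OF sf] sh] by simp
      have IHb: "\<And>\<nu> z. length \<nu> \<le> n \<Longrightarrow> iter_pdiff \<nu> (\<lambda>z. f z * pdiff \<mu> h z) differentiable (at z)"
        using Suc.IH[rule_format, OF sf smooth_pdiff[OF sh]] by simp
      have pd: "pdiff \<mu> (\<lambda>z. f z * h z) = (\<lambda>z. pdiff \<mu> f z * h z + f z * pdiff \<mu> h z)"
        by (rule ext, rule pdiff_mult) (use sf sh smooth_diff in auto)
      have eq: "iter_pdiff \<mu>s (\<lambda>z. f z * h z) =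
         (\<lambda>z. iter_pdiff \<nu>s (\<lambda>z. pdiff \<mu> f z * h z) z + iter_pdiff \<nu>s (\<lambda>z. f z * pdiff \<mu> h z) z)"
        unfolding mus iter_pdiff_append
        apply (simp add: pd)
        apply (rule iter_pdiff_add)
        using IHa IHb ln by simp
      show ?thesis unfolding eq
        using IHa IHb ln by (intro differentiable_add) auto
    qed
  qed
qed

lemma smooth_mult:
  fixes f h :: "'n::finite phase \<Rightarrow> complex"
  assumes "smooth_phase f" "smooth_phase h"
  shows "smooth_phase (\<lambda>z. f z * h z)"
  unfolding smooth_phase_def using smooth_mult_aux assms by blast

definition vo :: "'n::finite phase \<Rightarrow> ('n phase \<Rightarrow> complex) \<Rightarrow> int \<Rightarrow> bool" where
  "vo z0 f p \<longleftrightarrow> (\<forall>\<mu>s. int (length \<mu>s) < p \<longrightarrow> iter_pdiff \<mu>s f z0 = 0)"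

lemma vo_mono: "vo z0 f p \<Longrightarrow> q \<le> p \<Longrightarrow> vo z0 f q"
  unfolding vo_def by auto

lemma vo_nonpos: "p \<le> 0 \<Longrightarrow> vo z0 f p"
  unfolding vo_def by auto

lemma vo_iter: "vo z0 f p \<Longrightarrow> vo z0 (iter_pdiff \<nu>s f) (p - int (length \<nu>s))"
  unfolding vo_def by (auto simp: iter_pdiff_append[symmetric])

lemma vo_sum:
  fixes F :: "'i \<Rightarrow> 'n::finite phase \<Rightarrow> complex"
  assumes "\<forall>i\<in>I. smooth_phase (F i)" "\<And>i. i \<in> I \<Longrightarrow> vo z0 (F i) p"
  shows "vo z0 (\<lambda>z. \<Sum>i\<in>I. F i z) p"
  unfolding vo_def iter_pdiff_sum[where I=I and F=F, OF assms(1)] using assms(2) by (auto simp: vo_def)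

lemma vo_mult_aux:
  "\<forall>(f :: 'n::finite phase \<Rightarrow> complex) h p q. smooth_phase f \<longrightarrow> smooth_phase h \<longrightarrow>
     vo z0 f p \<longrightarrow> vo z0 h q \<longrightarrow>
     (\<forall>(\<mu>s :: ('n+'n) list). length \<mu>s = n \<longrightarrow> int n < p + q \<longrightarrow> iter_pdiff \<mu>s (\<lambda>z. f z * h z) z0 = 0)"
proof (induction n)
  case 0
  show ?case
  proof (intro allI impI)
    fix f h :: "'n phase \<Rightarrow> complex" and p q :: int and \<mu>s :: "('n+'n) list"
    assume "vo z0 f p" "vo z0 h q" "length \<mu>s = 0" "int 0 < p + q"
    then show "iter_pdiff \<mu>s (\<lambda>z. f z * h z) z0 = 0"
      unfolding vo_def by (cases "0 < p") (auto dest: spec[of _ "[]"])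
  qed
next
  case (Suc n)
  show ?case
  proof (intro allI impI)
    fix f h :: "'n phase \<Rightarrow> complex" and p q :: int and \<mu>s :: "('n+'n) list"
    assume sf: "smooth_phase f" and sh: "smooth_phase h" and vf: "vo z0 f p" and vh: "vo z0 h q"
      and len: "length \<mu>s = Suc n" and lt: "int (Suc n) < p + q"
    have "\<mu>s \<noteq> []" using len by auto
    then obtain \<nu>s \<mu> where mus: "\<mu>s = \<nu>s @ [\<mu>]" by (cases \<mu>s rule: rev_cases) auto
    with len have ln: "length \<nu>s = n" by simp
    have pd: "pdiff \<mu> (\<lambda>z. f z * h z) = (\<lambda>z. pdiff \<mu> f z * h z + f z * pdiff \<mu> h z)"
      by (rule ext, rule pdiff_mult) (use sf sh smooth_diff in auto)
    have eq: "iter_pdiff \<mu>s (\<lambda>z. f z * h z) =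
       (\<lambda>z. iter_pdiff \<nu>s (\<lambda>z. pdiff \<mu> f z * h z) z + iter_pdiff \<nu>s (\<lambda>z. f z * pdiff \<mu> h z) z)"
      unfolding mus iter_pdiff_append
      apply (simp add: pd)
      apply (rule iter_pdiff_add)
      using smooth_mult[OF smooth_pdiff[OF sf] sh] smooth_mult[OF sf smooth_pdiff[OF sh]]
      unfolding smooth_phase_def by simp
    have vf': "vo z0 (pdiff \<mu> f) (p - 1)" using vo_iter[OF vf, of "[\<mu>]"] by simp
    have vh': "vo z0 (pdiff \<mu> h) (q - 1)" using vo_iter[OF vh, of "[\<mu>]"] by simp
    have 1: "iter_pdiff \<nu>s (\<lambda>z. pdiff \<mu> f z * h z) z0 = 0"
      using Suc.IH[rule_format, OF smooth_pdiff[OF sf] sh vf' vh, of \<nu>s] ln lt by simp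
    have 2: "iter_pdiff \<nu>s (\<lambda>z. f z * pdiff \<mu> h z) z0 = 0"
      using Suc.IH[rule_format, OF sf smooth_pdiff[OF sh] vf vh', of \<nu>s] ln lt by simp
    show "iter_pdiff \<mu>s (\<lambda>z. f z * h z) z0 = 0"
      unfolding eq using 1 2 by simp
  qed
qed

lemma vo_mult:
  fixes f h :: "'n::finite phase \<Rightarrow> complex"
  assumes "smooth_phase f" "smooth_phase h" "vo z0 f p" "vo z0 h q"
  shows "vo z0 (\<lambda>z. f z * h z) (p + q)"
  unfolding vo_def using vo_mult_aux assms by blast

lemma moyal_term_eq:
  "moyal_term k f h = (\<lambda>z. \<Sum>\<mu>s\<in>{\<mu>s::('n::finite+'n) list. length \<mu>s = k}. \<Sum>\<nu>s\<in>{\<nu>s::('n+'n) list. length \<nu>s = k}.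
        iter_pdiff \<mu>s f z * complex_of_real (\<Prod>r<k. symplJ (\<mu>s ! r) (\<nu>s ! r)) * iter_pdiff \<nu>s h z)"
  by (rule ext) (simp add: moyal_term_def)

lemma moyal_term_props:
  fixes f h :: "'n::finite phase \<Rightarrow> complex"
  assumes sf: "smooth_phase f" and sh: "smooth_phase h" and vf: "vo z0 f p" and vh: "vo z0 h q"
  shows "smooth_phase (moyal_term k f h) \<and> vo z0 (moyal_term k f h) (p + q - 2 * int k)"
proof -
  have fin: "finite {\<mu>s::('n+'n) list. length \<mu>s = k}"
    using finite_lists_length_eq[of "UNIV::('n+'n) set" k] by simp
  have trm: "smooth_phase (\<lambda>z. iter_pdiff \<mu>s f z * c * iter_pdiff \<nu>s h z) \<and>
     vo z0 (\<lambda>z. iter_pdiff \<mu>s f z * c * iter_pdiff \<nu>s h z) (p + q - 2 * int k)"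
    if "length \<mu>s = k" "length \<nu>s = k" for \<mu>s \<nu>s and c :: complex
  proof -
    have s1: "smooth_phase (\<lambda>z. iter_pdiff \<mu>s f z * c)"
      by (rule smooth_mult[OF smooth_iter[OF sf] smooth_const])
    have v1: "vo z0 (\<lambda>z. iter_pdiff \<mu>s f z * c) ((p - int k) + 0)"
      by (rule vo_mult[OF smooth_iter[OF sf] smooth_const]) (use vo_iter[OF vf, of \<mu>s] that in \<open>auto intro: vo_nonpos\<close>)
    have "vo z0 (\<lambda>z. iter_pdiff \<mu>s f z * c * iter_pdiff \<nu>s h z) (((p - int k) + 0) + (q - int k))"
      by (rule vo_mult[OF s1 smooth_iter[OF sh] v1]) (use vo_iter[OF vh, of \<nu>s] that in auto)
    then have "vo z0 (\<lambda>z. iter_pdiff \<mu>s f z * c * iter_pdiff \<nu>s h z) (p + q - 2 * int k)"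
      by (rule vo_mono) simp
    then show ?thesis using smooth_mult[OF s1 smooth_iter[OF sh]] by simp
  qed
  show ?thesis
    unfolding moyal_term_eq
    using trm fin
    by (auto intro!: smooth_sum vo_sum)
qed



lemma moyal_eq:
  "(B \<star> D) n = (\<lambda>z. \<Sum>j\<le>n. \<Sum>k\<le>n - j.
      (\<i> / 2) ^ k / of_nat (fact k) * moyal_term k (B j) (D (n - j - k)) z)"
  by (simp add: moyal_def)

lemma moyal_step:
  fixes B D :: "'n::finite symb"
  assumes sB: "\<And>k. smooth_phase (B k)" and vB: "\<And>k. vo z0 (B k) 1"
    and sD: "\<And>k. smooth_phase (D k)" and vD: "\<And>n. vo z0 (D n) (int J - 2 * int n)"
  shows "smooth_phase ((B \<star> D) n) \<and> vo z0 ((B \<star> D) n) (int (Suc J) - 2 * int n)"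
proof -
  have t: "smooth_phase (\<lambda>z. c * moyal_term k (B j) (D (n - j - k)) z) \<and>
     vo z0 (\<lambda>z. c * moyal_term k (B j) (D (n - j - k)) z) (int (Suc J) - 2 * int n)"
    if "j \<le> n" "k \<le> n - j" for j k and c :: complex
  proof -
    have m: "smooth_phase (moyal_term k (B j) (D (n - j - k))) \<and>
      vo z0 (moyal_term k (B j) (D (n - j - k))) (1 + (int J - 2 * int (n - j - k)) - 2 * int k)"
      by (rule moyal_term_props[OF sB sD vB vD])
    have le: "int (Suc J) - 2 * int n \<le> 0 + (1 + (int J - 2 * int (n - j - k)) - 2 * int k)"
      using that by (simp add: of_nat_diff)
    have v: "vo z0 (\<lambda>z. c * moyal_term k (B j) (D (n - j - k)) z) (0 + (1 + (int J - 2 * int (n - j - k)) - 2 * int k))"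
      by (rule vo_mult[OF smooth_const conjunct1[OF m] vo_nonpos conjunct2[OF m]]) simp
    show ?thesis
      using smooth_mult[OF smooth_const conjunct1[OF m], of c] vo_mono[OF v le] by simp
  qed
  have ts: "smooth_phase (\<lambda>z. c * moyal_term k (B j) (D (n - j - k)) z)"
    if "j \<in> {..n}" "k \<in> {..n - j}" for j k and c :: complex
    using t[of j k c] that by simp
  have tv: "vo z0 (\<lambda>z. c * moyal_term k (B j) (D (n - j - k)) z) (int (Suc J) - 2 * int n)"
    if "j \<in> {..n}" "k \<in> {..n - j}" for j k and c :: complex
    using t[of j k c] that by simp
  have s1: "smooth_phase (\<lambda>z. \<Sum>k\<le>n - j. (\<i> / 2) ^ k / of_nat (fact k) * moyal_term k (B j) (D (n - j - k)) z)"
    if "j \<in> {..n}" for j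
    by (intro smooth_sum finite_atMost ballI ts that)
  have v1: "vo z0 (\<lambda>z. \<Sum>k\<le>n - j. (\<i> / 2) ^ k / of_nat (fact k) * moyal_term k (B j) (D (n - j - k)) z) (int (Suc J) - 2 * int n)"
    if "j \<in> {..n}" for j
    by (intro vo_sum ballI ts tv that)
  show ?thesis unfolding moyal_eq
    by (intro conjI smooth_sum vo_sum finite_atMost ballI s1 v1)
qed



lemma vd_Suc: "(vderiv ^^ Suc k) g = vderiv ((vderiv ^^ k) g)"
  by simp

lemma vd_Suc_right: "(vderiv ^^ Suc k) g = (vderiv ^^ k) (vderiv g)"
  by (simp add: funpow_Suc_right del: funpow.simps)

lemma smooth_fun_diff: "smooth_fun g \<Longrightarrow> g differentiable (at t)"
  unfolding smooth_fun_def by (drule spec[of _ 0]) simp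

lemma smooth_fun_vderiv: "smooth_fun g \<Longrightarrow> smooth_fun (vderiv g)"
  unfolding smooth_fun_def by (metis vd_Suc_right)

lemma smooth_fun_iter: "smooth_fun g \<Longrightarrow> (vderiv ^^ k) g differentiable (at t)"
  unfolding smooth_fun_def by simp

lemma vderiv_add: "a differentiable (at t) \<Longrightarrow> b differentiable (at t) \<Longrightarrow>
  vderiv (\<lambda>t. a t + b t) t = vderiv a t + vderiv b t"
  by (simp add: vderiv_def)

lemma vderiv_mult: "a differentiable (at t) \<Longrightarrow> b differentiable (at t) \<Longrightarrow>
  vderiv (\<lambda>t. a t * b t) t = a t * vderiv b t + vderiv a t * (b t :: complex)"
  by (simp add: vderiv_def)

lemma vd_add:
  fixes F G :: "real \<Rightarrow> complex"
  assumes "\<And>j t. j < k \<Longrightarrow> (vderiv ^^ j) F differentiable (at t) \<and> (vderiv ^^ j) G differentiable (at t)"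
  shows "(vderiv ^^ k) (\<lambda>t. F t + G t) = (\<lambda>t. (vderiv ^^ k) F t + (vderiv ^^ k) G t)"
  using assms
proof (induction k)
  case 0 then show ?case by simp
next
  case (Suc k)
  have ih: "(vderiv ^^ k) (\<lambda>t. F t + G t) = (\<lambda>t. (vderiv ^^ k) F t + (vderiv ^^ k) G t)"
    using Suc.IH Suc.prems by simp
  show ?case
    unfolding vd_Suc ih
    by (rule ext, rule vderiv_add) (use Suc.prems in auto)
qed

lemma smooth_fun_add:
  assumes "smooth_fun F" "smooth_fun G"
  shows "smooth_fun (\<lambda>t. F t + G t)"
  unfolding smooth_fun_def
proof (intro allI)
  fix k t
  have "(vderiv ^^ k) (\<lambda>t. F t + G t) = (\<lambda>t. (vderiv ^^ k) F t + (vderiv ^^ k) G t)"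
    by (rule vd_add) (use assms smooth_fun_iter in blast)
  then show "(vderiv ^^ k) (\<lambda>t. F t + G t) differentiable (at t)"
    using assms smooth_fun_iter by (simp add: differentiable_add)
qed

lemma smooth_fun_mult_aux:
  "\<forall>f h. smooth_fun f \<longrightarrow> smooth_fun h \<longrightarrow> (\<forall>j t. j \<le> k \<longrightarrow> (vderiv ^^ j) (\<lambda>t. f t * h t) differentiable (at t))"
proof (induction k)
  case 0
  show ?case
  proof (intro allI impI)
    fix f h :: "real \<Rightarrow> complex" and j :: nat and t :: real
    assume "smooth_fun f" "smooth_fun h" "j \<le> 0"
    then show "(vderiv ^^ j) (\<lambda>t. f t * h t) differentiable (at t)"
      using smooth_fun_diff by (simp add: differentiable_mult)
  qed
next
  case (Suc k)
  show ?case
  proof (intro allI impI)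
    fix f h :: "real \<Rightarrow> complex" and j :: nat and t :: real
    assume sf: "smooth_fun f" and sh: "smooth_fun h" and j: "j \<le> Suc k"
    show "(vderiv ^^ j) (\<lambda>t. f t * h t) differentiable (at t)"
    proof (cases "j \<le> k")
      case True then show ?thesis using Suc.IH sf sh by blast
    next
      case False
      then have jj: "j = Suc k" using j by simp
      have IHa: "\<And>i t. i \<le> k \<Longrightarrow> (vderiv ^^ i) (\<lambda>t. f t * vderiv h t) differentiable (at t)"
        using Suc.IH[rule_format, OF sf smooth_fun_vderiv[OF sh]] by simp
      have IHb: "\<And>i t. i \<le> k \<Longrightarrow> (vderiv ^^ i) (\<lambda>t. vderiv f t * h t) differentiable (at t)"
        using Suc.IH[rule_format, OF smooth_fun_vderiv[OF sf] sh] by simp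
      have pd: "vderiv (\<lambda>t. f t * h t) = (\<lambda>t. f t * vderiv h t + vderiv f t * h t)"
        by (rule ext, rule vderiv_mult) (use sf sh smooth_fun_diff in auto)
      have eq: "(vderiv ^^ j) (\<lambda>t. f t * h t) =
        (\<lambda>t. (vderiv ^^ k) (\<lambda>t. f t * vderiv h t) t + (vderiv ^^ k) (\<lambda>t. vderiv f t * h t) t)"
        unfolding jj vd_Suc_right pd
        by (rule vd_add) (use IHa IHb in simp)
      show ?thesis unfolding eq using IHa IHb by (simp add: differentiable_add)
    qed
  qed
qed

lemma smooth_fun_mult:
  assumes "smooth_fun f" "smooth_fun h"
  shows "smooth_fun (\<lambda>t. f t * h t)"
  unfolding smooth_fun_def using smooth_fun_mult_aux assms by blast

lemma vd_const: "(vderiv ^^ k) (\<lambda>_. c) = (\<lambda>_. if k = 0 then c else 0)"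
  by (induction k) (auto simp: vderiv_def)

lemma smooth_fun_const: "smooth_fun (\<lambda>_. c)"
  unfolding smooth_fun_def vd_const by simp

lemma vderiv_of_real: "vderiv (\<lambda>t. complex_of_real t) = (\<lambda>_. 1)"
  unfolding vderiv_def
  by (rule ext, rule vector_derivative_at) (auto intro!: derivative_eq_intros)

lemma smooth_fun_of_real: "smooth_fun (\<lambda>t. complex_of_real t)"
  unfolding smooth_fun_def
proof (intro allI)
  fix k t
  show "(vderiv ^^ k) (\<lambda>t. complex_of_real t) differentiable (at t)"
  proof (cases k)
    case 0 then show ?thesis by (auto intro!: derivative_intros)
  next
    case (Suc k')
    then show ?thesis by (simp only: vd_Suc_right vderiv_of_real vd_const) simp
  qed
qed



lemma deriv_I:
  fixes f f' :: "real \<Rightarrow> complex"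
  assumes df: "\<And>x. (f has_vector_derivative f' x) (at x)" and cf': "continuous_on UNIV f'"
  shows "((\<lambda>t. integral {0..1} (\<lambda>s. complex_of_real (s ^ k) * f (a + s * (t - a)))) has_vector_derivative
          integral {0..1} (\<lambda>s. complex_of_real (s ^ Suc k) * f' (a + s * (t - a)))) (at t)"
proof -
  have cf: "continuous_on UNIV f"
    using df by (intro continuous_on_vector_derivative) (auto intro: has_vector_derivative_at_within)
  have fx: "((\<lambda>x. complex_of_real (s ^ k) * f (a + s * (x - a))) has_vector_derivative
      complex_of_real (s ^ Suc k) * f' (a + s * (x - a))) (at x within UNIV)" for x s
  proof -
    have l: "((\<lambda>x. a + s * (x - a)) has_vector_derivative s) (at x)"
      by (auto intro!: derivative_eq_intros simp: has_real_derivative_iff_has_vector_derivative[symmetric])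
    have "((f \<circ> (\<lambda>x. a + s * (x - a))) has_vector_derivative (s *\<^sub>R f' (a + s * (x - a)))) (at x)"
      by (rule vector_diff_chain_at[OF l df])
    then have "((\<lambda>x. complex_of_real (s ^ k) * f (a + s * (x - a))) has_vector_derivative
       complex_of_real (s ^ k) * (s *\<^sub>R f' (a + s * (x - a)))) (at x)"
      unfolding o_def by (rule has_vector_derivative_mult_right)
    then show ?thesis by (simp add: scaleR_conv_of_real mult_ac)
  qed
  have cont: "continuous_on (UNIV \<times> cbox 0 1) (\<lambda>(x, s). complex_of_real (s ^ Suc k) * f' (a + s * (x - a)))"
  proof -
    have "continuous_on (UNIV \<times> cbox 0 1) (\<lambda>p. complex_of_real (snd p ^ Suc k) * f' (a + snd p * (fst p - a)))"
      by (intro continuous_intros continuous_on_compose2[OF cf']) auto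
    then show ?thesis by (simp add: case_prod_unfold)
  qed
  have int: "(\<lambda>s. complex_of_real (s ^ k) * f (a + s * (x - a))) integrable_on cbox 0 1" for x
  proof -
    have "continuous_on {0..1} (\<lambda>s. complex_of_real (s ^ k) * f (a + s * (x - a)))"
      by (intro continuous_intros continuous_on_compose2[OF cf]) auto
    then show ?thesis by (simp add: integrable_continuous_interval)
  qed
  show ?thesis
    using leibniz_rule_vector_derivative[where f="\<lambda>t s. complex_of_real (s ^ k) * f (a + s * (t - a))"
        and fx="\<lambda>t s. complex_of_real (s ^ Suc k) * f' (a + s * (t - a))" and U=UNIV and a=0 and b=1 and ?x0.0=t,
        OF fx int cont]
    by simp
qed

lemma hadamard1:
  fixes g :: "real \<Rightarrow> complex"
  assumes sg: "smooth_fun g" and g0: "g a = 0"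
  shows "\<exists>h. smooth_fun h \<and> (\<forall>t. g t = (complex_of_real t - complex_of_real a) * h t) \<and>
     (\<forall>k. (vderiv ^^ Suc k) g a = 0 \<longrightarrow> (vderiv ^^ k) h a = 0)"
proof -
  define D where "D k = (vderiv ^^ k) g" for k
  have dD: "(D k has_vector_derivative D (Suc k) x) (at x)" for k x
  proof -
    have "D k differentiable (at x)" unfolding D_def by (rule smooth_fun_iter[OF sg])
    then show ?thesis unfolding D_def by (simp add: vderiv_def vector_derivative_works)
  qed
  have cD: "continuous_on UNIV (D k)" for k
    using dD by (intro continuous_on_vector_derivative) (auto intro: has_vector_derivative_at_within)
  define I where "I k = (\<lambda>t. integral {0..1} (\<lambda>s. complex_of_real (s ^ k) * D (Suc k) (a + s * (t - a))))" for k
  have dI: "(I k has_vector_derivative I (Suc k) t) (at t)" for k t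
    unfolding I_def by (rule deriv_I[OF dD cD])
  define h where "h = I 0"
  have vh: "(vderiv ^^ k) h = I k" for k
  proof (induction k)
    case 0 then show ?case by (simp add: h_def)
  next
    case (Suc k)
    show ?case
      by (simp only: vd_Suc Suc.IH) (auto simp: vderiv_def intro!: ext vector_derivative_at dI)
  qed
  have sh: "smooth_fun h"
    unfolding smooth_fun_def vh using dI differentiableI_vector by blast
  have fact1: "g t = (complex_of_real t - complex_of_real a) * h t" for t
  proof -
    have "((\<lambda>s. (t - a) *\<^sub>R D 1 (a + s * (t - a))) has_integral
        (g (a + 1 * (t - a)) - g (a + 0 * (t - a)))) {0..1}"
    proof (rule fundamental_theorem_of_calculus)
      fix x :: real
      have l: "((\<lambda>s. a + s * (t - a)) has_vector_derivative (t - a)) (at x)"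
        by (auto intro!: derivative_eq_intros simp: has_real_derivative_iff_has_vector_derivative[symmetric])
      have "((D 0 \<circ> (\<lambda>s. a + s * (t - a))) has_vector_derivative ((t - a) *\<^sub>R D 1 (a + x * (t - a)))) (at x)"
        using vector_diff_chain_at[OF l dD[of 0]] by simp
      then show "((\<lambda>s. g (a + s * (t - a))) has_vector_derivative (t - a) *\<^sub>R D 1 (a + x * (t - a))) (at x within {0..1})"
        by (auto simp: D_def o_def intro: has_vector_derivative_at_within)
    qed simp
    then have i1: "((\<lambda>s. (t - a) *\<^sub>R D 1 (a + s * (t - a))) has_integral g t) {0..1}"
      using g0 by simp
    have "continuous_on {0..1} (\<lambda>s. D 1 (a + s * (t - a)))"
      by (intro continuous_intros continuous_on_compose2[OF cD]) auto
    then have "(\<lambda>s. D 1 (a + s * (t - a))) integrable_on {0..1}"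
      by (simp add: integrable_continuous_interval)
    then have "((\<lambda>s. D 1 (a + s * (t - a))) has_integral h t) {0..1}"
      by (simp add: h_def I_def has_integral_integral)
    then have i2: "((\<lambda>s. (t - a) *\<^sub>R D 1 (a + s * (t - a))) has_integral (t - a) *\<^sub>R h t) {0..1}"
      by (rule has_integral_cmul)
    have "g t = (t - a) *\<^sub>R h t" using has_integral_unique[OF i1 i2] .
    then show ?thesis by (simp add: scaleR_conv_of_real)
  qed
  have fact2: "(vderiv ^^ k) h a = 0" if "(vderiv ^^ Suc k) g a = 0" for k
    using that by (simp add: vh I_def D_def del: funpow.simps)
  show ?thesis using sh fact1 fact2 by blast
qed

lemma hadamard:
  "\<forall>g. smooth_fun g \<longrightarrow> (\<forall>k<m. (vderiv ^^ k) g a = 0) \<longrightarrow>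
     (\<exists>h. smooth_fun h \<and> g = (\<lambda>t. (complex_of_real t - complex_of_real a) ^ m * h t))"
proof (induction m)
  case 0 then show ?case by auto
next
  case (Suc m)
  show ?case
  proof (intro allI impI)
    fix g :: "real \<Rightarrow> complex"
    assume sg: "smooth_fun g" and z: "\<forall>k<Suc m. (vderiv ^^ k) g a = 0"
    then have "g a = 0" by (metis funpow_0 zero_less_Suc)
    then obtain h1 where sh1: "smooth_fun h1" and eq1: "\<forall>t. g t = (complex_of_real t - complex_of_real a) * h1 t"
      and d1: "\<forall>k. (vderiv ^^ Suc k) g a = 0 \<longrightarrow> (vderiv ^^ k) h1 a = 0"
      using hadamard1[OF sg] by blast
    have "\<forall>k<m. (vderiv ^^ k) h1 a = 0"
    proof (intro allI impI)
      fix k assume "k < m"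
      then have "Suc k < Suc m" by simp
      with z have "(vderiv ^^ Suc k) g a = 0" by blast
      with d1 show "(vderiv ^^ k) h1 a = 0" by blast
    qed
    then obtain h where sh: "smooth_fun h" and eq: "h1 = (\<lambda>t. (complex_of_real t - complex_of_real a) ^ m * h t)"
      using Suc.IH sh1 by blast
    have "g = (\<lambda>t. (complex_of_real t - complex_of_real a) ^ Suc m * h t)"
      using eq1 eq by (auto simp: fun_eq_iff)
    then show "\<exists>h. smooth_fun h \<and> g = (\<lambda>t. (complex_of_real t - complex_of_real a) ^ Suc m * h t)"
      using sh by blast
  qed
qed



theorem lemma3:
  fixes A :: "'n::finite symb"
    and \<Phi> :: "(real \<Rightarrow> complex) \<Rightarrow> 'n symb"
    and z0 :: "'n phase"
    and a0 :: real
    and g :: "real \<Rightarrow> complex"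
    and m :: nat
  assumes "smooth_symb A"
    and "A 0 z0 = complex_of_real a0"
    and "\<forall>k>0. A k z0 = 0"
    and "symbol_calculus A \<Phi>"
    and "smooth_fun g"
    and "zero_of_order g a0 m"
  shows "\<forall>k. 2 * k < m \<longrightarrow> \<Phi> g k z0 = 0"
proof -
  have sm: "\<And>g. smooth_fun g \<Longrightarrow> smooth_symb (\<Phi> g)"
    and add: "\<And>g h. smooth_fun g \<Longrightarrow> smooth_fun h \<Longrightarrow> \<Phi> (\<lambda>t. g t + h t) = (\<lambda>k z. \<Phi> g k z + \<Phi> h k z)"
    and mul: "\<And>g h. smooth_fun g \<Longrightarrow> smooth_fun h \<Longrightarrow> \<Phi> (\<lambda>t. g t * h t) = \<Phi> g \<star> \<Phi> h"
    and cst: "\<And>c. \<Phi> (\<lambda>_. c) = const_symb c"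
    and idA: "\<Phi> (\<lambda>t. complex_of_real t) = A"
    using assms(4) unfolding symbol_calculus_def by blast+
  define l where "l = (\<lambda>t. complex_of_real t - complex_of_real a0)"
  have l_eq: "l = (\<lambda>t. complex_of_real t + (\<lambda>_. - complex_of_real a0) t)"
    by (simp add: l_def fun_eq_iff)
  have sl: "smooth_fun l"
    unfolding l_eq by (rule smooth_fun_add[OF smooth_fun_of_real smooth_fun_const])
  define B where "B = \<Phi> l"
  have B_eq: "B = (\<lambda>k z. \<Phi> (\<lambda>t. complex_of_real t) k z + \<Phi> (\<lambda>_. - complex_of_real a0) k z)"
    unfolding B_def l_eq by (rule add[OF smooth_fun_of_real smooth_fun_const])
  have sB: "\<And>k. smooth_phase (B k)"
    using sm[OF sl] unfolding B_def smooth_symb_def by blast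
  have B0: "B k z0 = 0" for k
    using assms(2,3) unfolding B_eq idA cst const_symb_def by (cases "k = 0") auto
  have vB: "\<And>k. vo z0 (B k) 1"
    unfolding vo_def using B0 by simp
  have z: "\<forall>k<m. (vderiv ^^ k) g a0 = 0"
    using assms(6) unfolding zero_of_order_def by blast
  obtain h where sh: "smooth_fun h" and geq: "g = (\<lambda>t. (complex_of_real t - complex_of_real a0) ^ m * h t)"
    using hadamard[of m a0] assms(5) z by blast
  have geq': "g = (\<lambda>t. l t ^ m * h t)"
    unfolding geq l_def ..
  have sP: "smooth_fun (\<lambda>t. l t ^ j * h t)" for j
  proof (induction j)
    case 0 then show ?case using sh by simp
  next
    case (Suc j)
    have "(\<lambda>t. l t ^ Suc j * h t) = (\<lambda>t. l t * (l t ^ j * h t))"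
      by (simp add: fun_eq_iff mult.assoc)
    then show ?case using smooth_fun_mult[OF sl Suc.IH] by simp
  qed
  have P: "smooth_symb (\<Phi> (\<lambda>t. l t ^ j * h t)) \<and> (\<forall>n. vo z0 (\<Phi> (\<lambda>t. l t ^ j * h t) n) (int j - 2 * int n))" for j
  proof (induction j)
    case 0
    show ?case using sm[OF sP[of 0]] by (auto intro: vo_nonpos)
  next
    case (Suc j)
    have "(\<lambda>t. l t ^ Suc j * h t) = (\<lambda>t. l t * (l t ^ j * h t))"
      by (simp add: fun_eq_iff mult.assoc)
    then have e: "\<Phi> (\<lambda>t. l t ^ Suc j * h t) = B \<star> \<Phi> (\<lambda>t. l t ^ j * h t)"
      using mul[OF sl sP[of j]] B_def by simp
    have st: "smooth_phase ((B \<star> \<Phi> (\<lambda>t. l t ^ j * h t)) n) \<and>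
        vo z0 ((B \<star> \<Phi> (\<lambda>t. l t ^ j * h t)) n) (int (Suc j) - 2 * int n)" for n
      by (rule moyal_step[OF sB vB]) (use Suc.IH in \<open>auto simp: smooth_symb_def\<close>)
    show ?case unfolding e smooth_symb_def using st by blast
  qed
  show ?thesis
  proof (intro allI impI)
    fix k assume k: "2 * k < m"
    have "vo z0 (\<Phi> g k) (int m - 2 * int k)"
      using P[of m] geq' by simp
    then show "\<Phi> g k z0 = 0"
      unfolding vo_def using k by (auto dest: spec[of _ "[]"])
  qed
qed

end
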